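(* Let $D$ be a BN distribution on $\{0,1\}^n$ with all conditional probabilities in $(0,1)$ and variable order $1,\dots,n$ a topological order, and let $f:\{0,1\}^n\to\mathbb{R}$ satisfy $\mathbb{E}_D[f(X)^2]\le 1$. Let $\theta>0$, $0\le k\le n$, and let $U$ be distributed as $(X_1,\dots,X_{n-k})$ for $X\sim D$. Then: (1) the number of $S\subseteq[n]$ with $|\hat f_S|\ge\theta$ is at most $1/\theta^2$; (2) for every $\alpha\in\{0,1\}^k$, $\mathbb{E}[g_\alpha(U)^2]=\sum_{\beta\in\{0,1\}^{n-k}}\hat f_{\beta\alpha}^2$; (3) if there is $\beta\in\{0,1\}^{n-k}$ with $|\hat f_{\beta\alpha}|\ge\theta$ then $\mathbb{E}[g_\alpha(U)^2]\ge\theta^2$; (4) the number of $\alpha\in\{0,1\}^k$ with $\mathbb{E}[g_\alpha(U)^2]\ge\theta^2$ is at most $1/\theta^2$.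
   Context: A Bayesian network (BN) on binary variables $X_1,\dots,X_n$ is a directed acyclic graph on $[n]$ with parent sets $\operatorname{pa}(v)$ and conditional distributions with $P(X_1,\dots,X_n)=\prod_v P(X_v\mid X_{\operatorname{pa}(v)})$. Let $\mu_{v,x_{\operatorname{pa}(v)}}=P(X_v=1\mid X_{\operatorname{pa}(v)}=x_{\operatorname{pa}(v)})$, $\sigma_{v,x_{\operatorname{pa}(v)}}=\sqrt{\mu_{v,x_{\operatorname{pa}(v)}}(1-\mu_{v,x_{\operatorname{pa}(v)}})}$, $\phi_v(x)=(x_v-\mu_{v,x_{\operatorname{pa}(v)}})/\sigma_{v,x_{\operatorname{pa}(v)}}$, $\phi_S=\prod_{v\in S}\phi_v$, and $\hat f_S=\mathbb{E}_D[f(X)\phi_S(X)]$. Sets $S\subseteq[n]$ are identified with strings $\gamma\in\{0,1\}^n$ via $\gamma_i=1\iff i\in S$. For $\beta\in\{0,1\}^{n-k}$, $\alpha\in\{0,1\}^k$, $\beta\alpha$ is their concatenation ($\beta$ in coordinates $1,\dots,n-k$), $0^m$ the zero string of length $m$, and $g_\alpha(u)=\sum_{\beta\in\{0,1\}^{n-k}}\hat f_{\beta\alpha}\,\phi_{\beta0^k}(u0^k)$ for $u\in\{0,1\}^{n-k}$. *)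

theory Defs
  imports Complex_Main
begin

text \<open>A point x in {0,1}^n is represented by the set of coordinates
equal to 1, i.e. a subset of {1..n}; likewise sets S of variables are subsets of {1..n}
(so strings gamma and sets S coincide). A Bayesian network with variable order 1..n
is given by parent sets pa v and conditional probabilities cp v A = P(X_v = 1 | X_pa(v) = 1_A)
for A a subset of pa v.\<close>

definition bn_mu :: "(nat \<Rightarrow> nat set) \<Rightarrow> (nat \<Rightarrow> nat set \<Rightarrow> real) \<Rightarrow> nat \<Rightarrow> nat set \<Rightarrow> real" where
  "bn_mu pa cp v x = cp v (x \<inter> pa v)"

definition bn_sigma :: "(nat \<Rightarrow> nat set) \<Rightarrow> (nat \<Rightarrow> nat set \<Rightarrow> real) \<Rightarrow> nat \<Rightarrow> nat set \<Rightarrow> real" where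
  "bn_sigma pa cp v x = sqrt (bn_mu pa cp v x * (1 - bn_mu pa cp v x))"

definition bn_phi :: "(nat \<Rightarrow> nat set) \<Rightarrow> (nat \<Rightarrow> nat set \<Rightarrow> real) \<Rightarrow> nat \<Rightarrow> nat set \<Rightarrow> real" where
  "bn_phi pa cp v x = ((if v \<in> x then 1 else 0) - bn_mu pa cp v x) / bn_sigma pa cp v x"

definition bn_phiS :: "(nat \<Rightarrow> nat set) \<Rightarrow> (nat \<Rightarrow> nat set \<Rightarrow> real) \<Rightarrow> nat set \<Rightarrow> nat set \<Rightarrow> real" where
  "bn_phiS pa cp S x = (\<Prod>v\<in>S. bn_phi pa cp v x)"

definition bn_prob :: "nat \<Rightarrow> (nat \<Rightarrow> nat set) \<Rightarrow> (nat \<Rightarrow> nat set \<Rightarrow> real) \<Rightarrow> nat set \<Rightarrow> real" where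
  "bn_prob n pa cp x = (\<Prod>v\<in>{1..n}. if v \<in> x then bn_mu pa cp v x else 1 - bn_mu pa cp v x)"

definition bn_expect :: "nat \<Rightarrow> (nat \<Rightarrow> nat set) \<Rightarrow> (nat \<Rightarrow> nat set \<Rightarrow> real) \<Rightarrow> (nat set \<Rightarrow> real) \<Rightarrow> real" where
  "bn_expect n pa cp h = (\<Sum>x\<in>Pow {1..n}. bn_prob n pa cp x * h x)"

definition fourier_coeff :: "nat \<Rightarrow> (nat \<Rightarrow> nat set) \<Rightarrow> (nat \<Rightarrow> nat set \<Rightarrow> real) \<Rightarrow> (nat set \<Rightarrow> real) \<Rightarrow> nat set \<Rightarrow> real" where
  "fourier_coeff n pa cp f S = bn_expect n pa cp (\<lambda>x. f x * bn_phiS pa cp S x)"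

text \<open>Concatenation beta alpha: beta in coordinates 1..n-k, alpha (a subset of {1..k})
shifted to coordinates n-k+1..n.\<close>
definition concat_str :: "nat \<Rightarrow> nat \<Rightarrow> nat set \<Rightarrow> nat set \<Rightarrow> nat set" where
  "concat_str n k \<beta> \<alpha> = \<beta> \<union> (\<lambda>i. i + (n - k)) ` \<alpha>"

text \<open>g_alpha(u) = sum over beta of hat f_{beta alpha} phi_{beta 0^k}(u 0^k); u 0^k is just u
(a subset of {1..n-k}) in the set representation.\<close>
definition g_alpha :: "nat \<Rightarrow> nat \<Rightarrow> (nat \<Rightarrow> nat set) \<Rightarrow> (nat \<Rightarrow> nat set \<Rightarrow> real) \<Rightarrow> (nat set \<Rightarrow> real) \<Rightarrow> nat set \<Rightarrow> nat set \<Rightarrow> real" where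
  "g_alpha n k pa cp f \<alpha> u =
     (\<Sum>\<beta>\<in>Pow {1..n-k}. fourier_coeff n pa cp f (concat_str n k \<beta> \<alpha>) * bn_phiS pa cp \<beta> u)"

definition marg_expect :: "nat \<Rightarrow> nat \<Rightarrow> (nat \<Rightarrow> nat set) \<Rightarrow> (nat \<Rightarrow> nat set \<Rightarrow> real) \<Rightarrow> (nat set \<Rightarrow> real) \<Rightarrow> real" where
  "marg_expect n k pa cp h = bn_expect n pa cp (\<lambda>x. h (x \<inter> {1..n-k}))"

end

theory Submission
  imports Defs
begin

lemma mu_insert: "N \<notin> pa v \<Longrightarrow> bn_mu pa cp v (insert N y) = bn_mu pa cp v y"
  by (simp add: bn_mu_def)

lemma phi_insert: "N \<notin> pa v \<Longrightarrow> v \<noteq> N \<Longrightarrow> bn_phi pa cp v (insert N y) = bn_phi pa cp v y"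
  by (simp add: bn_phi_def bn_sigma_def mu_insert)

lemma phiS_insert: "\<forall>v\<in>S. N \<notin> pa v \<and> v \<noteq> N \<Longrightarrow> bn_phiS pa cp S (insert N y) = bn_phiS pa cp S y"
  unfolding bn_phiS_def by (rule prod.cong) (auto simp: phi_insert)

lemma phiS_split: "finite S \<Longrightarrow> bn_phiS pa cp S x = bn_phiS pa cp (S - {N}) x * (if N \<in> S then bn_phi pa cp N x else 1)"
proof (cases "N \<in> S")
  case True
  assume "finite S"
  then have "S = insert N (S - {N})" using True by auto
  then have "bn_phiS pa cp S x = bn_phiS pa cp (insert N (S - {N})) x" by simp
  also have "\<dots> = bn_phi pa cp N x * bn_phiS pa cp (S - {N}) x"
    unfolding bn_phiS_def using \<open>finite S\<close> by (subst prod.insert) auto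
  finally show ?thesis using True by simp
next
  case False then show ?thesis by simp
qed

lemma sum_Pow_Suc: "(\<Sum>x\<in>Pow {1..Suc n}. h x) = (\<Sum>y\<in>Pow {1..n}. h y + h (insert (Suc n) y))"
proof -
  have e: "{1..Suc n} = insert (Suc n) {1..n}" by auto
  have d: "Pow {1..n} \<inter> insert (Suc n) ` Pow {1..n} = {}" by auto
  have i: "inj_on (insert (Suc n)) (Pow {1..n})"
  proof (rule inj_onI)
    fix x z assume x: "x \<in> Pow {1..n}" and z: "z \<in> Pow {1..n}" and eq: "insert (Suc n) x = insert (Suc n) z"
    have "x = insert (Suc n) x - {Suc n}" using x by auto
    also have "\<dots> = insert (Suc n) z - {Suc n}" using eq by simp
    also have "\<dots> = z" using z by auto
    finally show "x = z" .
  qed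
  have "(\<Sum>x\<in>Pow {1..Suc n}. h x) = (\<Sum>x\<in>Pow {1..n}. h x) + (\<Sum>x\<in>insert (Suc n) ` Pow {1..n}. h x)"
    unfolding e Pow_insert by (rule sum.union_disjoint) (auto simp: d)
  also have "(\<Sum>x\<in>insert (Suc n) ` Pow {1..n}. h x) = (\<Sum>y\<in>Pow {1..n}. h (insert (Suc n) y))"
    by (subst sum.reindex[OF i]) simp
  finally show ?thesis by (simp add: sum.distrib)
qed

lemma bracket:
  fixes m s :: real
  assumes "0 < m" "m < 1" "s = sqrt (m * (1 - m))"
  shows "(1-m) * ((if a then -m/s else 1) * (if b then -m/s else 1))
       + m * ((if a then (1-m)/s else 1) * (if b then (1-m)/s else 1)) = (if a = b then 1 else 0)"
proof -
  have p: "m * (1 - m) > 0" using assms by simp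
  have s2: "s * s = m * (1 - m)" using assms p by (simp add: real_sqrt_mult_self)
  have sp: "s > 0" using assms p by simp
  show ?thesis
  proof (cases a; cases b)
    assume a b
    have "(1-m) * ((-m/s) * (-m/s)) + m * (((1-m)/s) * ((1-m)/s)) = (m * (1-m)) / (s * s)"
      using sp by (simp add: field_simps)
    then show ?thesis using \<open>a\<close> \<open>b\<close> s2 p assms by simp
  qed (use sp in \<open>auto simp: field_simps\<close>)
qed

lemma prob_Suc:
  assumes topo: "\<forall>v\<in>{1..Suc n}. pa v \<subseteq> {1..<v}" and y: "y \<subseteq> {1..n}"
  shows "bn_prob (Suc n) pa cp y = bn_prob n pa cp y * (1 - cp (Suc n) (y \<inter> pa (Suc n)))"
    and "bn_prob (Suc n) pa cp (insert (Suc n) y) = bn_prob n pa cp y * cp (Suc n) (y \<inter> pa (Suc n))"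
proof -
  have e: "{1..Suc n} = insert (Suc n) {1..n}" by auto
  have nin: "Suc n \<notin> y" using y by auto
  have "pa (Suc n) \<subseteq> {1..<Suc n}" using topo by simp
  then have nN: "Suc n \<notin> pa (Suc n)" by auto
  show "bn_prob (Suc n) pa cp y = bn_prob n pa cp y * (1 - cp (Suc n) (y \<inter> pa (Suc n)))"
    unfolding bn_prob_def e using nin by (simp add: bn_mu_def mult.commute)
  have c: "(\<Prod>v\<in>{1..n}. if v \<in> insert (Suc n) y then bn_mu pa cp v (insert (Suc n) y) else 1 - bn_mu pa cp v (insert (Suc n) y))
      = (\<Prod>v\<in>{1..n}. if v \<in> y then bn_mu pa cp v y else 1 - bn_mu pa cp v y)"
  proof (rule prod.cong)
    fix v assume v: "v \<in> {1..n}"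
    then have "Suc n \<notin> pa v" using topo by force
    then show "(if v \<in> insert (Suc n) y then bn_mu pa cp v (insert (Suc n) y) else 1 - bn_mu pa cp v (insert (Suc n) y))
      = (if v \<in> y then bn_mu pa cp v y else 1 - bn_mu pa cp v y)" using v by (simp add: mu_insert)
  qed simp
  show "bn_prob (Suc n) pa cp (insert (Suc n) y) = bn_prob n pa cp y * cp (Suc n) (y \<inter> pa (Suc n))"
    unfolding bn_prob_def e using nin nN
    apply (subst prod.insert, simp, simp)
    unfolding c by (simp add: bn_mu_def mult.commute)
qed


lemma ortho:
  assumes "\<forall>v\<in>{1..n}. pa v \<subseteq> {1..<v}" "\<forall>v\<in>{1..n}. \<forall>A. A \<subseteq> pa v \<longrightarrow> 0 < cp v A \<and> cp v A < 1"
    "S \<subseteq> {1..n}" "T \<subseteq> {1..n}"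
  shows "bn_expect n pa cp (\<lambda>x. bn_phiS pa cp S x * bn_phiS pa cp T x) = (if S = T then 1 else 0)"
  using assms
proof (induction n arbitrary: S T)
  case 0 then show ?case by (simp add: bn_expect_def bn_prob_def bn_phiS_def)
next
  case (Suc n)
  define N where "N = Suc n"
  define S' where "S' = S - {N}"
  define T' where "T' = T - {N}"
  have topo: "\<forall>v\<in>{1..Suc n}. pa v \<subseteq> {1..<v}" using Suc.prems by simp
  have S': "S' \<subseteq> {1..n}" using Suc.prems(3) by (auto simp: S'_def N_def le_Suc_eq)
  have T': "T' \<subseteq> {1..n}" using Suc.prems(4) by (auto simp: T'_def N_def le_Suc_eq)
  have IH: "bn_expect n pa cp (\<lambda>x. bn_phiS pa cp S' x * bn_phiS pa cp T' x) = (if S' = T' then 1 else 0)"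
    using Suc.IH[OF _ _ S' T'] Suc.prems(1,2) by simp
  have finS: "finite S" "finite T" using Suc.prems(3,4) finite_subset by auto
  have pN: "pa N \<subseteq> {1..<N}" using topo by (simp add: N_def)
  define c where "c = (if (N \<in> S) = (N \<in> T) then 1 else (0::real))"
  have key: "bn_prob N pa cp y * (bn_phiS pa cp S y * bn_phiS pa cp T y)
     + bn_prob N pa cp (insert N y) * (bn_phiS pa cp S (insert N y) * bn_phiS pa cp T (insert N y))
     = bn_prob n pa cp y * (bn_phiS pa cp S' y * bn_phiS pa cp T' y) * c"
    if y: "y \<in> Pow {1..n}" for y
  proof -
    define m where "m = cp N (y \<inter> pa N)"
    define s where "s = sqrt (m * (1 - m))"
    have m: "0 < m" "m < 1" using Suc.prems(2) by (auto simp: m_def N_def)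
    have yN: "N \<notin> y" using y by (auto simp: N_def)
    have nN: "N \<notin> pa N" using pN by auto
    have ph0: "bn_phi pa cp N y = - m / s" using yN
      by (simp add: bn_phi_def bn_sigma_def bn_mu_def m_def s_def)
    have ph1: "bn_phi pa cp N (insert N y) = (1 - m) / s" using nN
      by (simp add: bn_phi_def bn_sigma_def bn_mu_def m_def s_def)
    have nv: "\<forall>v\<in>S'. N \<notin> pa v \<and> v \<noteq> N" "\<forall>v\<in>T'. N \<notin> pa v \<and> v \<noteq> N"
    proof -
      have "N \<notin> pa v \<and> v \<noteq> N" if "v \<in> {1..n}" for v
      proof -
        have "pa v \<subseteq> {1..<v}" using topo that by auto
        then show ?thesis using that by (auto simp: N_def)
      qed
      then show "\<forall>v\<in>S'. N \<notin> pa v \<and> v \<noteq> N" "\<forall>v\<in>T'. N \<notin> pa v \<and> v \<noteq> N" using S' T' by blast+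
    qed
    have br: "(1-m) * ((if N \<in> S then -m/s else 1) * (if N \<in> T then -m/s else 1))
       + m * ((if N \<in> S then (1-m)/s else 1) * (if N \<in> T then (1-m)/s else 1)) = c"
      unfolding c_def by (rule bracket[OF m s_def])
    have p0: "bn_prob N pa cp y = bn_prob n pa cp y * (1 - m)"
      using prob_Suc(1)[OF topo] y by (simp add: m_def N_def)
    have p1: "bn_prob N pa cp (insert N y) = bn_prob n pa cp y * m"
      using prob_Suc(2)[OF topo] y by (simp add: m_def N_def)
    have g0: "bn_phiS pa cp S z = bn_phiS pa cp S' z * (if N \<in> S then bn_phi pa cp N z else 1)"
      "bn_phiS pa cp T z = bn_phiS pa cp T' z * (if N \<in> T then bn_phi pa cp N z else 1)" for z
      unfolding S'_def T'_def by (rule phiS_split[OF finS(1)], rule phiS_split[OF finS(2)])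
    have i: "bn_phiS pa cp S' (insert N y) = bn_phiS pa cp S' y" "bn_phiS pa cp T' (insert N y) = bn_phiS pa cp T' y"
      by (rule phiS_insert[OF nv(1)], rule phiS_insert[OF nv(2)])
    have f0: "bn_phiS pa cp S y = bn_phiS pa cp S' y * (if N \<in> S then -m/s else 1)"
             "bn_phiS pa cp T y = bn_phiS pa cp T' y * (if N \<in> T then -m/s else 1)"
      unfolding g0 ph0 by simp_all
    have f1: "bn_phiS pa cp S (insert N y) = bn_phiS pa cp S' y * (if N \<in> S then (1-m)/s else 1)"
             "bn_phiS pa cp T (insert N y) = bn_phiS pa cp T' y * (if N \<in> T then (1-m)/s else 1)"
      unfolding g0 ph1 i by simp_all
    have alg: "P*(1-m)*((A*a0)*(B*b0)) + P*m*((A*a1)*(B*b1)) = P*(A*B)*((1-m)*(a0*b0) + m*(a1*b1))"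
      for P A B a0 b0 a1 b1 :: real by (simp add: algebra_simps)
    show ?thesis
      unfolding p0 p1 f0 f1 br[symmetric] by (rule alg)
  qed
  have "bn_expect (Suc n) pa cp (\<lambda>x. bn_phiS pa cp S x * bn_phiS pa cp T x)
      = (\<Sum>y\<in>Pow {1..n}. bn_prob n pa cp y * (bn_phiS pa cp S' y * bn_phiS pa cp T' y) * c)"
    unfolding bn_expect_def sum_Pow_Suc unfolding N_def[symmetric] by (rule sum.cong) (auto simp: key)
  also have "\<dots> = (\<Sum>y\<in>Pow {1..n}. bn_prob n pa cp y * (bn_phiS pa cp S' y * bn_phiS pa cp T' y)) * c"
    by (rule sum_distrib_right[symmetric])
  also have "\<dots> = (if S' = T' then 1 else 0) * c"
    using IH unfolding bn_expect_def by simp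
  also have "\<dots> = (if S = T then 1 else 0)"
    unfolding c_def S'_def T'_def by auto
  finally show ?case .
qed


lemma expect_sum: "bn_expect n pa cp (\<lambda>x. \<Sum>i\<in>I. h i x) = (\<Sum>i\<in>I. bn_expect n pa cp (h i))"
  unfolding bn_expect_def by (simp add: sum_distrib_left sum.swap[of _ I])

lemma expect_cmult: "bn_expect n pa cp (\<lambda>x. a * h x) = a * bn_expect n pa cp h"
  unfolding bn_expect_def by (simp add: sum_distrib_left algebra_simps)

lemma expect_add: "bn_expect n pa cp (\<lambda>x. h x + g x) = bn_expect n pa cp h + bn_expect n pa cp g"
  unfolding bn_expect_def by (simp add: sum.distrib algebra_simps)

lemma expect_diff: "bn_expect n pa cp (\<lambda>x. h x - g x) = bn_expect n pa cp h - bn_expect n pa cp g"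
  unfolding bn_expect_def by (simp add: sum_subtractf algebra_simps)

lemma prob_nonneg:
  assumes "\<forall>v\<in>{1..n}. \<forall>A. A \<subseteq> pa v \<longrightarrow> 0 < cp v A \<and> cp v A < 1"
  shows "bn_prob n pa cp x \<ge> 0"
  unfolding bn_prob_def
proof (rule prod_nonneg)
  fix v assume "v \<in> {1..n}"
  then have "0 < cp v (x \<inter> pa v) \<and> cp v (x \<inter> pa v) < 1" using assms by blast
  then show "0 \<le> (if v \<in> x then bn_mu pa cp v x else 1 - bn_mu pa cp v x)" by (simp add: bn_mu_def)
qed

lemma expect_nonneg:
  assumes "\<forall>v\<in>{1..n}. \<forall>A. A \<subseteq> pa v \<longrightarrow> 0 < cp v A \<and> cp v A < 1" "\<And>x. h x \<ge> 0"
  shows "bn_expect n pa cp h \<ge> 0"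
  unfolding bn_expect_def using prob_nonneg[OF assms(1)] assms(2) by (simp add: sum_nonneg)

lemma expect_sq_sum:
  assumes topo: "\<forall>v\<in>{1..n}. pa v \<subseteq> {1..<v}" and cpr: "\<forall>v\<in>{1..n}. \<forall>A. A \<subseteq> pa v \<longrightarrow> 0 < cp v A \<and> cp v A < 1"
    and I: "I \<subseteq> Pow {1..n}"
  shows "bn_expect n pa cp (\<lambda>x. (\<Sum>S\<in>I. c S * bn_phiS pa cp S x)\<^sup>2) = (\<Sum>S\<in>I. (c S)\<^sup>2)"
proof -
  have fin: "finite I" using I finite_subset by blast
  have "(\<lambda>x. (\<Sum>S\<in>I. c S * bn_phiS pa cp S x)\<^sup>2)
      = (\<lambda>x. \<Sum>S\<in>I. \<Sum>T\<in>I. c S * c T * (bn_phiS pa cp S x * bn_phiS pa cp T x))"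
    by (rule ext) (simp add: power2_eq_square sum_product algebra_simps)
  then have "bn_expect n pa cp (\<lambda>x. (\<Sum>S\<in>I. c S * bn_phiS pa cp S x)\<^sup>2)
      = (\<Sum>S\<in>I. \<Sum>T\<in>I. c S * c T * bn_expect n pa cp (\<lambda>x. bn_phiS pa cp S x * bn_phiS pa cp T x))"
    by (simp add: expect_sum expect_cmult)
  also have "\<dots> = (\<Sum>S\<in>I. \<Sum>T\<in>I. c S * c T * (if S = T then 1 else 0))"
  proof (intro sum.cong refl)
    fix S T assume "S \<in> I" "T \<in> I"
    then show "c S * c T * bn_expect n pa cp (\<lambda>x. bn_phiS pa cp S x * bn_phiS pa cp T x) = c S * c T * (if S = T then 1 else 0)"
    proof -
      have "S \<subseteq> {1..n}" "T \<subseteq> {1..n}" using \<open>S \<in> I\<close> \<open>T \<in> I\<close> I by auto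
      from ortho[OF topo cpr this] show ?thesis by simp
    qed
  qed
  also have "\<dots> = (\<Sum>S\<in>I. (c S)\<^sup>2)"
    using fin by (simp add: power2_eq_square if_distrib[where f="\<lambda>z. _ * z"] sum.delta cong: if_cong)
  finally show ?thesis .
qed

lemma bessel:
  assumes topo: "\<forall>v\<in>{1..n}. pa v \<subseteq> {1..<v}" and cpr: "\<forall>v\<in>{1..n}. \<forall>A. A \<subseteq> pa v \<longrightarrow> 0 < cp v A \<and> cp v A < 1"
  shows "(\<Sum>S\<in>Pow {1..n}. (fourier_coeff n pa cp f S)\<^sup>2) \<le> bn_expect n pa cp (\<lambda>x. (f x)\<^sup>2)"
proof -
  define c where "c S = fourier_coeff n pa cp f S" for S
  define g where "g x = (\<Sum>S\<in>Pow {1..n}. c S * bn_phiS pa cp S x)" for x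
  have "0 \<le> bn_expect n pa cp (\<lambda>x. (f x - g x)\<^sup>2)"
    by (rule expect_nonneg[OF cpr]) simp
  also have "(\<lambda>x. (f x - g x)\<^sup>2) = (\<lambda>x. ((f x)\<^sup>2 + (g x)\<^sup>2) - 2 * (f x * g x))"
    by (rule ext) (simp add: power2_eq_square algebra_simps)
  also have "bn_expect n pa cp \<dots> = bn_expect n pa cp (\<lambda>x. (f x)\<^sup>2) + bn_expect n pa cp (\<lambda>x. (g x)\<^sup>2)
       - 2 * bn_expect n pa cp (\<lambda>x. f x * g x)"
    by (simp add: expect_diff expect_add expect_cmult)
  also have "bn_expect n pa cp (\<lambda>x. (g x)\<^sup>2) = (\<Sum>S\<in>Pow {1..n}. (c S)\<^sup>2)"
    unfolding g_def by (rule expect_sq_sum[OF topo cpr]) simp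
  also have "bn_expect n pa cp (\<lambda>x. f x * g x) = (\<Sum>S\<in>Pow {1..n}. (c S)\<^sup>2)"
  proof -
    have "(\<lambda>x. f x * g x) = (\<lambda>x. \<Sum>S\<in>Pow {1..n}. c S * (f x * bn_phiS pa cp S x))"
      unfolding g_def by (rule ext) (simp add: sum_distrib_left algebra_simps)
    then show ?thesis
      by (simp add: expect_sum expect_cmult power2_eq_square c_def fourier_coeff_def)
  qed
  finally show ?thesis unfolding c_def by simp
qed


lemma count_bound:
  fixes h :: "'a \<Rightarrow> real" and \<theta> :: real
  assumes "finite A" "\<forall>a\<in>A. \<theta>\<^sup>2 \<le> h a" "sum h A \<le> 1" "\<theta> > 0"
  shows "real (card A) \<le> 1 / \<theta>\<^sup>2"
proof -
  have "real (card A) * \<theta>\<^sup>2 = (\<Sum>a\<in>A. \<theta>\<^sup>2)" by simp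
  also have "\<dots> \<le> sum h A" using assms(2) by (intro sum_mono) auto
  finally have "real (card A) * \<theta>\<^sup>2 \<le> 1" using assms(3) by simp
  then show ?thesis using assms(4) by (simp add: pos_le_divide_eq)
qed

lemma phiS_restrict:
  assumes topo: "\<forall>v\<in>{1..n}. pa v \<subseteq> {1..<v}" and "m \<le> n" "\<beta> \<subseteq> {1..m}"
  shows "bn_phiS pa cp \<beta> (x \<inter> {1..m}) = bn_phiS pa cp \<beta> x"
  unfolding bn_phiS_def
proof (rule prod.cong[OF refl])
  fix v assume v: "v \<in> \<beta>"
  then have v1: "v \<in> {1..m}" using assms by auto
  then have "pa v \<subseteq> {1..<v}" using topo assms(2) by auto
  then have "x \<inter> {1..m} \<inter> pa v = x \<inter> pa v" using v1 by auto
  then show "bn_phi pa cp v (x \<inter> {1..m}) = bn_phi pa cp v x"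
    using v1 by (simp add: bn_phi_def bn_sigma_def bn_mu_def)
qed

lemma marg_eq:
  assumes topo: "\<forall>v\<in>{1..n}. pa v \<subseteq> {1..<v}" and cpr: "\<forall>v\<in>{1..n}. \<forall>A. A \<subseteq> pa v \<longrightarrow> 0 < cp v A \<and> cp v A < 1"
  shows "marg_expect n k pa cp (\<lambda>u. (g_alpha n k pa cp f \<alpha> u)\<^sup>2)
          = (\<Sum>\<beta>\<in>Pow {1..n-k}. (fourier_coeff n pa cp f (concat_str n k \<beta> \<alpha>))\<^sup>2)"
proof -
  have "(\<lambda>x. (g_alpha n k pa cp f \<alpha> (x \<inter> {1..n-k}))\<^sup>2)
     = (\<lambda>x. (\<Sum>\<beta>\<in>Pow {1..n-k}. fourier_coeff n pa cp f (concat_str n k \<beta> \<alpha>) * bn_phiS pa cp \<beta> x)\<^sup>2)"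
    unfolding g_alpha_def
  proof (rule ext, rule arg_cong[where f="\<lambda>z. z\<^sup>2"], rule sum.cong[OF refl])
    fix x \<beta> assume "\<beta> \<in> Pow {1..n-k}"
    then have b: "\<beta> \<subseteq> {1..n-k}" by simp
    show "fourier_coeff n pa cp f (concat_str n k \<beta> \<alpha>) * bn_phiS pa cp \<beta> (x \<inter> {1..n - k})
        = fourier_coeff n pa cp f (concat_str n k \<beta> \<alpha>) * bn_phiS pa cp \<beta> x"
      by (subst phiS_restrict[OF topo diff_le_self b]) (rule refl)
  qed
  then have "marg_expect n k pa cp (\<lambda>u. (g_alpha n k pa cp f \<alpha> u)\<^sup>2)
     = bn_expect n pa cp (\<lambda>x. (\<Sum>\<beta>\<in>Pow {1..n-k}. fourier_coeff n pa cp f (concat_str n k \<beta> \<alpha>) * bn_phiS pa cp \<beta> x)\<^sup>2)"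
    unfolding marg_expect_def by simp
  also have "\<dots> = (\<Sum>\<beta>\<in>Pow {1..n-k}. (fourier_coeff n pa cp f (concat_str n k \<beta> \<alpha>))\<^sup>2)"
    by (rule expect_sq_sum[OF topo cpr]) (intro Pow_mono, auto)
  finally show ?thesis .
qed

lemma concat_inj:
  assumes "k \<le> n"
  shows "inj_on (\<lambda>(\<alpha>, \<beta>). concat_str n k \<beta> \<alpha>) (Pow {1..k} \<times> Pow {1..n-k})"
    and "(\<lambda>(\<alpha>, \<beta>). concat_str n k \<beta> \<alpha>) ` (Pow {1..k} \<times> Pow {1..n-k}) \<subseteq> Pow {1..n}"
proof -
  show "(\<lambda>(\<alpha>, \<beta>). concat_str n k \<beta> \<alpha>) ` (Pow {1..k} \<times> Pow {1..n-k}) \<subseteq> Pow {1..n}"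
  proof -
  have H: "concat_str n k b a \<subseteq> {1..n}" if a: "a \<subseteq> {1..k}" and b: "b \<subseteq> {1..n-k}" for a b
  proof -
    have "{1..n-k} \<subseteq> {1..n}" by auto
    then have 1: "b \<subseteq> {1..n}" using b by blast
    have 2: "(\<lambda>i. i + (n-k)) ` a \<subseteq> {1..n}"
    proof
      fix y assume "y \<in> (\<lambda>i. i + (n-k)) ` a"
      then obtain i where "i \<in> a" "y = i + (n-k)" by blast
      moreover then have "1 \<le> i" "i \<le> k" using a by auto
      ultimately show "y \<in> {1..n}" using assms by auto
    qed
    show "concat_str n k b a \<subseteq> {1..n}" unfolding concat_str_def using 1 2 by blast
  qed
  then show ?thesis by auto
  qed
  show "inj_on (\<lambda>(\<alpha>, \<beta>). concat_str n k \<beta> \<alpha>) (Pow {1..k} \<times> Pow {1..n-k})"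
  proof (rule inj_onI)
    fix p q assume pP: "p \<in> Pow {1..k} \<times> Pow {1..n-k}" and qP: "q \<in> Pow {1..k} \<times> Pow {1..n-k}"
      and eq0: "(\<lambda>(\<alpha>, \<beta>). concat_str n k \<beta> \<alpha>) p = (\<lambda>(\<alpha>, \<beta>). concat_str n k \<beta> \<alpha>) q"
    obtain a1 b1 where p: "p = (a1, b1)" by (cases p)
    obtain a2 b2 where q: "q = (a2, b2)" by (cases q)
    have a1: "a1 \<subseteq> {1..k}" and b1: "b1 \<subseteq> {1..n-k}" using pP p by auto
    have a2: "a2 \<subseteq> {1..k}" and b2: "b2 \<subseteq> {1..n-k}" using qP q by auto
    have eq: "concat_str n k b1 a1 = concat_str n k b2 a2" using eq0 p q by simp
    have r1: "concat_str n k b1 a1 \<inter> {1..n-k} = b1" using a1 b1 by (auto simp: concat_str_def)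
    have r2: "concat_str n k b2 a2 \<inter> {1..n-k} = b2" using a2 b2 by (auto simp: concat_str_def)
    have bb: "b1 = b2" using r1 r2 eq by simp
    have s1: "concat_str n k b1 a1 - {1..n-k} = (\<lambda>i. i + (n - k)) ` a1" using a1 b1 by (auto simp: concat_str_def)
    have s2: "concat_str n k b2 a2 - {1..n-k} = (\<lambda>i. i + (n - k)) ` a2" using a2 b2 by (auto simp: concat_str_def)
    have "(\<lambda>i. i + (n - k)) ` a1 = (\<lambda>i. i + (n - k)) ` a2" using s1 s2 eq by simp
    moreover have "inj (\<lambda>i::nat. i + (n - k))" by (rule injI) simp
    ultimately have "a1 = a2" by (simp add: inj_image_eq_iff)
    then show "p = q" using p q bb by simp
  qed
qed

theorem mainTheorem3:
  fixes n k :: nat and pa :: "nat \<Rightarrow> nat set" and cp :: "nat \<Rightarrow> nat set \<Rightarrow> real"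
    and f :: "nat set \<Rightarrow> real" and \<theta> :: real
  assumes topo: "\<forall>v\<in>{1..n}. pa v \<subseteq> {1..<v}"
    and cp_range: "\<forall>v\<in>{1..n}. \<forall>A. A \<subseteq> pa v \<longrightarrow> 0 < cp v A \<and> cp v A < 1"
    and f_norm: "bn_expect n pa cp (\<lambda>x. (f x)\<^sup>2) \<le> 1"
    and theta_pos: "\<theta> > 0"
    and k_le: "k \<le> n"
  shows "real (card {S. S \<subseteq> {1..n} \<and> \<bar>fourier_coeff n pa cp f S\<bar> \<ge> \<theta>}) \<le> 1 / \<theta>\<^sup>2
    \<and> (\<forall>\<alpha>. \<alpha> \<subseteq> {1..k} \<longrightarrow>
          marg_expect n k pa cp (\<lambda>u. (g_alpha n k pa cp f \<alpha> u)\<^sup>2)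
          = (\<Sum>\<beta>\<in>Pow {1..n-k}. (fourier_coeff n pa cp f (concat_str n k \<beta> \<alpha>))\<^sup>2))
    \<and> (\<forall>\<alpha>. \<alpha> \<subseteq> {1..k} \<longrightarrow>
          (\<exists>\<beta>. \<beta> \<subseteq> {1..n-k} \<and> \<bar>fourier_coeff n pa cp f (concat_str n k \<beta> \<alpha>)\<bar> \<ge> \<theta>) \<longrightarrow>
          marg_expect n k pa cp (\<lambda>u. (g_alpha n k pa cp f \<alpha> u)\<^sup>2) \<ge> \<theta>\<^sup>2)
    \<and> real (card {\<alpha>. \<alpha> \<subseteq> {1..k} \<and>
          marg_expect n k pa cp (\<lambda>u. (g_alpha n k pa cp f \<alpha> u)\<^sup>2) \<ge> \<theta>\<^sup>2}) \<le> 1 / \<theta>\<^sup>2"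
proof -
  define c where "c S = (fourier_coeff n pa cp f S)\<^sup>2" for S
  have c0: "c S \<ge> 0" for S by (simp add: c_def)
  have tot: "(\<Sum>S\<in>Pow {1..n}. c S) \<le> 1"
    using bessel[OF topo cp_range, of f] f_norm by (simp add: c_def)
  have sq: "\<theta>\<^sup>2 \<le> (fourier_coeff n pa cp f S)\<^sup>2" if "\<bar>fourier_coeff n pa cp f S\<bar> \<ge> \<theta>" for S
    using that theta_pos by (simp add: abs_le_square_iff[symmetric])
  have P1: "real (card {S. S \<subseteq> {1..n} \<and> \<bar>fourier_coeff n pa cp f S\<bar> \<ge> \<theta>}) \<le> 1 / \<theta>\<^sup>2"
  proof (rule count_bound[where h=c, OF _ _ _ theta_pos])
    let ?A = "{S. S \<subseteq> {1..n} \<and> \<bar>fourier_coeff n pa cp f S\<bar> \<ge> \<theta>}"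
    have sub: "?A \<subseteq> Pow {1..n}" by auto
    then show "finite ?A" using finite_subset by blast
    show "\<forall>a\<in>?A. \<theta>\<^sup>2 \<le> c a" using sq by (auto simp: c_def)
    have "sum c ?A \<le> sum c (Pow {1..n})" by (rule sum_mono2) (use sub c0 in auto)
    then show "sum c ?A \<le> 1" using tot by simp
  qed
  have P2: "\<forall>\<alpha>. \<alpha> \<subseteq> {1..k} \<longrightarrow>
          marg_expect n k pa cp (\<lambda>u. (g_alpha n k pa cp f \<alpha> u)\<^sup>2)
          = (\<Sum>\<beta>\<in>Pow {1..n-k}. (fourier_coeff n pa cp f (concat_str n k \<beta> \<alpha>))\<^sup>2)"
    using marg_eq[OF topo cp_range] by blast
  have P3: "\<forall>\<alpha>. \<alpha> \<subseteq> {1..k} \<longrightarrow>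
          (\<exists>\<beta>. \<beta> \<subseteq> {1..n-k} \<and> \<bar>fourier_coeff n pa cp f (concat_str n k \<beta> \<alpha>)\<bar> \<ge> \<theta>) \<longrightarrow>
          marg_expect n k pa cp (\<lambda>u. (g_alpha n k pa cp f \<alpha> u)\<^sup>2) \<ge> \<theta>\<^sup>2"
  proof (intro allI impI)
    fix \<alpha> assume "\<alpha> \<subseteq> {1..k}" and "\<exists>\<beta>. \<beta> \<subseteq> {1..n-k} \<and> \<bar>fourier_coeff n pa cp f (concat_str n k \<beta> \<alpha>)\<bar> \<ge> \<theta>"
    then obtain \<beta> where b: "\<beta> \<subseteq> {1..n-k}" "\<bar>fourier_coeff n pa cp f (concat_str n k \<beta> \<alpha>)\<bar> \<ge> \<theta>" by blast
    have "\<theta>\<^sup>2 \<le> c (concat_str n k \<beta> \<alpha>)" using sq[OF b(2)] by (simp add: c_def)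
    also have "\<dots> \<le> (\<Sum>\<beta>\<in>Pow {1..n-k}. c (concat_str n k \<beta> \<alpha>))"
      by (rule member_le_sum) (use b c0 in auto)
    finally show "marg_expect n k pa cp (\<lambda>u. (g_alpha n k pa cp f \<alpha> u)\<^sup>2) \<ge> \<theta>\<^sup>2"
      using marg_eq[OF topo cp_range] by (simp add: c_def)
  qed
  define E where "E \<alpha> = marg_expect n k pa cp (\<lambda>u. (g_alpha n k pa cp f \<alpha> u)\<^sup>2)" for \<alpha>
  have Eeq: "E \<alpha> = (\<Sum>\<beta>\<in>Pow {1..n-k}. c (concat_str n k \<beta> \<alpha>))" for \<alpha>
    unfolding E_def c_def by (rule marg_eq[OF topo cp_range])
  have E0: "E \<alpha> \<ge> 0" for \<alpha> unfolding Eeq by (rule sum_nonneg) (simp add: c0)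
  have totE: "(\<Sum>\<alpha>\<in>Pow {1..k}. E \<alpha>) \<le> 1"
  proof -
    have "(\<Sum>\<alpha>\<in>Pow {1..k}. E \<alpha>) = (\<Sum>(\<alpha>, \<beta>)\<in>Pow {1..k} \<times> Pow {1..n-k}. c (concat_str n k \<beta> \<alpha>))"
      unfolding Eeq by (rule sum.cartesian_product)
    also have "\<dots> = (\<Sum>S\<in>(\<lambda>(\<alpha>, \<beta>). concat_str n k \<beta> \<alpha>) ` (Pow {1..k} \<times> Pow {1..n-k}). c S)"
      by (subst sum.reindex[OF concat_inj(1)[OF k_le]]) (simp add: case_prod_unfold)
    also have "\<dots> \<le> (\<Sum>S\<in>Pow {1..n}. c S)"
      by (rule sum_mono2) (use concat_inj(2)[OF k_le] c0 in auto)
    finally show ?thesis using tot by simp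
  qed
  have P4: "real (card {\<alpha>. \<alpha> \<subseteq> {1..k} \<and> E \<alpha> \<ge> \<theta>\<^sup>2}) \<le> 1 / \<theta>\<^sup>2"
  proof (rule count_bound[where h=E, OF _ _ _ theta_pos])
    let ?A = "{\<alpha>. \<alpha> \<subseteq> {1..k} \<and> E \<alpha> \<ge> \<theta>\<^sup>2}"
    have sub: "?A \<subseteq> Pow {1..k}" by auto
    then show "finite ?A" using finite_subset by blast
    show "\<forall>a\<in>?A. \<theta>\<^sup>2 \<le> E a" by auto
    have "sum E ?A \<le> sum E (Pow {1..k})" by (rule sum_mono2) (use sub E0 in auto)
    then show "sum E ?A \<le> 1" using totE by simp
  qed
  show ?thesis using P1 P2 P3 P4 unfolding E_def by blast
qed

end
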